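(* Let $A\subset\mathbb{R}^N$ be nonempty and closed, and let $U:[0,\infty)\rightsquigarrow\mathbb{R}^M$ be measurable with nonempty closed images. Let $H:[0,\infty)\times\mathbb{R}^N\times\mathbb{R}^N\to\mathbb{R}$ be measurable in $t$, continuous in $x$, convex in $p$, with $H(t,x,0)\le-\phi(t)$ for all $t,x$ for some $\phi\in L^1([0,\infty);\mathbb{R})$. Let $f:[0,\infty)\times\mathbb{R}^N\times\mathbb{R}^M\to\mathbb{R}^N$ and $l:[0,\infty)\times\mathbb{R}^N\times\mathbb{R}^M\to\mathbb{R}$ be Lebesgue measurable in $t$ for all $(x,u)$, continuous in $(x,u)$ for all $t$, and satisfy $l(t,x,u)\ge\phi_1(t)$ for all $t,x,u$ for some $\phi_1\in L^1([0,\infty);\mathbb{R})$. If $(U,f,l)$ is an epigraphical representation of $H$, i.e. $\mathrm{gph}H^*(t,x,\cdot)\subset(f,l)(t,x,U(t))\subset\mathrm{epi}H^*(t,x,\cdot)$ for all $t\ge0$, $x\in\mathbb{R}^N$, then the value functions $V$ and $\mathcal{V}$ are well-defined and $$V(t_0,x_0)=\mathcal{V}(t_0,x_0)\quad\text{for all }(t_0,x_0)\in[0,\infty)\times A.$$ Moreover, if $\bar x(\cdot)$ is an optimal trajectory of $V$ at $(t_0,x_0)\in\mathrm{dom}V$, then there exists a measurable $\bar u(\cdot)$ such that $(\bar x,\bar u)(\cdot)$ is an optimal pair of $\mathcal{V}$ at $(t_0,x_0)$; conversely, if $(\bar x,\bar u)(\cdot)$ is an optimal pair of $\mathcal{V}$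 at $(t_0,x_0)\in\mathrm{dom}\mathcal{V}$, then $\bar x(\cdot)$ is an optimal trajectory of $V$ at $(t_0,x_0)$.
   Context: $H^*(t,x,v)=\sup_p\{\langle v,p\rangle-H(t,x,p)\}$, $\mathrm{dom}H^*(t,x,\cdot)=\{v:H^*(t,x,v)<+\infty\}$, $\mathrm{gph}$ the graph over the domain, $\mathrm{epi}$ the epigraph, $(f,l)(t,x,u)=(f(t,x,u),l(t,x,u))$. $S_H(t_0,x_0)$: locally absolutely continuous $x:[t_0,\infty)\to\mathbb{R}^N$ with $\dot x(t)\in\mathrm{dom}H^*(t,x(t),\cdot)$ a.e., $x(t_0)=x_0$, $x([t_0,\infty))\subset A$; $V(t_0,x_0)=\inf_{x\in S_H(t_0,x_0)}\int_{t_0}^\infty H^*(t,x(t),\dot x(t))dt$. $S_f(t_0,x_0)$: pairs $(x,u)$ with $x:[t_0,\infty)\to\mathbb{R}^N$ locally absolutely continuous, $u$ measurable, $\dot x(t)=f(t,x(t),u(t))$, $u(t)\in U(t)$ a.e. $t\ge t_0$, $x(t_0)=x_0$, $x([t_0,\infty))\subset A$; $\mathcal{V}(t_0,x_0)=\inf_{(x,u)\in S_f(t_0,x_0)}\int_{t_0}^\infty l(t,x(t),u(t))dt$. Infima over empty sets are $+\infty$. An optimal trajectory (pair) is one attaining the infimum. *)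

theory Defs
  imports "HOL-Analysis.Analysis"
begin

definition abs_cont_on :: "(real \<Rightarrow> 'a::real_normed_vector) \<Rightarrow> real \<Rightarrow> real \<Rightarrow> bool" where
  "abs_cont_on x a b \<longleftrightarrow>
     (\<forall>\<epsilon>>0. \<exists>\<delta>>0. \<forall>(n::nat) (c::nat \<Rightarrow> real) (d::nat \<Rightarrow> real).
        (\<forall>i<n. a \<le> c i \<and> c i \<le> d i \<and> d i \<le> b) \<longrightarrow>
        (\<forall>i<n. \<forall>j<n. i \<noteq> j \<longrightarrow> d i \<le> c j \<or> d j \<le> c i) \<longrightarrow>
        (\<Sum>i<n. d i - c i) < \<delta> \<longrightarrow>
        (\<Sum>i<n. norm (x (d i) - x (c i))) < \<epsilon>)"

definition loc_abs_cont :: "(real \<Rightarrow> 'a::real_normed_vector) \<Rightarrow> real \<Rightarrow> bool" where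
  "loc_abs_cont x t0 \<longleftrightarrow> (\<forall>T\<ge>t0. abs_cont_on x t0 T)"

definition measurable_multifun :: "(real \<Rightarrow> 'a::topological_space set) \<Rightarrow> bool" where
  "measurable_multifun U \<longleftrightarrow>
     (\<forall>W. open W \<longrightarrow> {t\<in>{0..}. U t \<inter> W \<noteq> {}} \<in> sets lebesgue)"

definition ext_integral :: "real set \<Rightarrow> (real \<Rightarrow> ereal) \<Rightarrow> ereal" where
  "ext_integral S g =
     enn2ereal (\<integral>\<^sup>+ t. e2ennreal (max 0 (g t)) * indicator S t \<partial>lebesgue)
   - enn2ereal (\<integral>\<^sup>+ t. e2ennreal (max 0 (- g t)) * indicator S t \<partial>lebesgue)"

definition Hstar :: "(real \<Rightarrow> 'n::euclidean_space \<Rightarrow> 'n \<Rightarrow> real) \<Rightarrow> real \<Rightarrow> 'n \<Rightarrow> 'n \<Rightarrow> ereal" where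
  "Hstar H t x v = (SUP p. ereal (inner v p - H t x p))"

definition domHstar :: "(real \<Rightarrow> 'n::euclidean_space \<Rightarrow> 'n \<Rightarrow> real) \<Rightarrow> real \<Rightarrow> 'n \<Rightarrow> 'n set" where
  "domHstar H t x = {v. Hstar H t x v < \<infinity>}"

definition gphHstar :: "(real \<Rightarrow> 'n::euclidean_space \<Rightarrow> 'n \<Rightarrow> real) \<Rightarrow> real \<Rightarrow> 'n \<Rightarrow> ('n \<times> real) set" where
  "gphHstar H t x = {(v, r). v \<in> domHstar H t x \<and> Hstar H t x v = ereal r}"

definition epiHstar :: "(real \<Rightarrow> 'n::euclidean_space \<Rightarrow> 'n \<Rightarrow> real) \<Rightarrow> real \<Rightarrow> 'n \<Rightarrow> ('n \<times> real) set" where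
  "epiHstar H t x = {(v, r). Hstar H t x v \<le> ereal r}"

definition S_H :: "(real \<Rightarrow> 'n::euclidean_space \<Rightarrow> 'n \<Rightarrow> real) \<Rightarrow> 'n set \<Rightarrow> real \<Rightarrow> 'n \<Rightarrow> (real \<Rightarrow> 'n) set" where
  "S_H H A t0 x0 = {x. loc_abs_cont x t0 \<and>
      (AE t in lebesgue. t \<in> {t0..} \<longrightarrow>
         x differentiable (at t) \<and> vector_derivative x (at t) \<in> domHstar H t (x t)) \<and>
      x t0 = x0 \<and> x ` {t0..} \<subseteq> A}"

definition cost_H :: "(real \<Rightarrow> 'n::euclidean_space \<Rightarrow> 'n \<Rightarrow> real) \<Rightarrow> real \<Rightarrow> (real \<Rightarrow> 'n) \<Rightarrow> ereal" where
  "cost_H H t0 x = ext_integral {t0..} (\<lambda>t. Hstar H t (x t) (vector_derivative x (at t)))"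

definition V_H :: "(real \<Rightarrow> 'n::euclidean_space \<Rightarrow> 'n \<Rightarrow> real) \<Rightarrow> 'n set \<Rightarrow> real \<Rightarrow> 'n \<Rightarrow> ereal" where
  "V_H H A t0 x0 = (INF x\<in>S_H H A t0 x0. cost_H H t0 x)"

definition S_f :: "(real \<Rightarrow> 'n::euclidean_space \<Rightarrow> 'm \<Rightarrow> 'n) \<Rightarrow> (real \<Rightarrow> 'm::euclidean_space set)
     \<Rightarrow> 'n set \<Rightarrow> real \<Rightarrow> 'n \<Rightarrow> ((real \<Rightarrow> 'n) \<times> (real \<Rightarrow> 'm)) set" where
  "S_f f U A t0 x0 = {(x, u). loc_abs_cont x t0 \<and>
      u \<in> borel_measurable (lebesgue_on {t0..}) \<and>
      (AE t in lebesgue. t \<in> {t0..} \<longrightarrow>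
         (x has_vector_derivative f t (x t) (u t)) (at t) \<and> u t \<in> U t) \<and>
      x t0 = x0 \<and> x ` {t0..} \<subseteq> A}"

definition cost_f :: "(real \<Rightarrow> 'n::euclidean_space \<Rightarrow> 'm::euclidean_space \<Rightarrow> real) \<Rightarrow> real
     \<Rightarrow> (real \<Rightarrow> 'n) \<Rightarrow> (real \<Rightarrow> 'm) \<Rightarrow> ereal" where
  "cost_f l t0 x u = ext_integral {t0..} (\<lambda>t. ereal (l t (x t) (u t)))"

definition V_f :: "(real \<Rightarrow> 'n::euclidean_space \<Rightarrow> 'm \<Rightarrow> 'n) \<Rightarrow> (real \<Rightarrow> 'n \<Rightarrow> 'm::euclidean_space \<Rightarrow> real)
     \<Rightarrow> (real \<Rightarrow> 'm set) \<Rightarrow> 'n set \<Rightarrow> real \<Rightarrow> 'n \<Rightarrow> ereal" where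
  "V_f f l U A t0 x0 = (INF xu\<in>S_f f U A t0 x0. cost_f l t0 (fst xu) (snd xu))"

definition integral_well_defined :: "real set \<Rightarrow> (real \<Rightarrow> ereal) \<Rightarrow> bool" where
  "integral_well_defined S g \<longleftrightarrow> g \<in> borel_measurable (lebesgue_on S) \<and>
     (\<integral>\<^sup>+ t. e2ennreal (max 0 (- g t)) * indicator S t \<partial>lebesgue) < \<infinity>"

end

theory Submission
  imports Defs
begin
lemma dense_seq_exists:
  obtains dd :: "nat \<Rightarrow> 'a::euclidean_space" where "\<And>x e. e > 0 \<Longrightarrow> \<exists>i. dist (dd i) x < e"
proof -
  obtain D :: "'a set" where D: "countable D" "\<And>X. open X \<Longrightarrow> X \<noteq> {} \<Longrightarrow> \<exists>d\<in>D. d \<in> X"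
    using countable_dense_setE by blast
  have "D \<noteq> {}" using D(2)[of UNIV] by auto
  have "\<exists>i. dist (from_nat_into D i) x < e" if "e > 0" for x e
  proof -
    obtain d where "d \<in> D" "d \<in> ball x e" using D(2)[of "ball x e"] \<open>e > 0\<close> by auto
    then show ?thesis using from_nat_into_surj[OF D(1)] by (metis dist_commute mem_ball)
  qed
  then show ?thesis using that by blast
qed

lemma carath_meas:
  fixes g :: "'t \<Rightarrow> 'a::euclidean_space \<Rightarrow> 'b::metric_space"
  assumes gm: "\<And>y. (\<lambda>t. g t y) \<in> borel_measurable M"
  and gc: "\<And>t. t \<in> space M \<Longrightarrow> continuous_on UNIV (g t)"
  and ym: "y \<in> borel_measurable M"
  shows "(\<lambda>t. g t (y t)) \<in> borel_measurable M"
proof -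
  obtain dd :: "nat \<Rightarrow> 'a" where dd: "\<And>x e. e > 0 \<Longrightarrow> \<exists>i. dist (dd i) x < e"
    using dense_seq_exists by blast
  define n where "n k t = (LEAST i. dist (dd i) (y t) < 1 / Suc k)" for k t
  have nm: "n k \<in> M \<rightarrow>\<^sub>M count_space UNIV" for k
    unfolding n_def using ym by measurable
  have fm: "(\<lambda>t. g t (dd (n k t))) \<in> borel_measurable M" for k
    by (rule measurable_compose_countable[OF _ nm]) (rule gm)
  show ?thesis
  proof (rule borel_measurable_LIMSEQ_metric[OF fm])
    fix t assume t: "t \<in> space M"
    have d: "dist (dd (n k t)) (y t) < 1 / Suc k" for k
      unfolding n_def by (rule LeastI_ex) (use dd in auto)
    have "(\<lambda>k. dd (n k t)) \<longlonglongrightarrow> y t"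
    proof (rule tendstoI)
      fix e :: real assume "e > 0"
      then obtain k0 where k0: "1 / Suc k0 < e" using nat_approx_posE by blast
      show "\<forall>\<^sub>F k in sequentially. dist (dd (n k t)) (y t) < e"
      proof (rule eventually_sequentiallyI[of k0])
        fix k assume "k0 \<le> k"
        then have "1 / real (Suc k) \<le> 1 / Suc k0" by (simp add: frac_le)
        then show "dist (dd (n k t)) (y t) < e" using d[of k] k0 by linarith
      qed
    qed
    moreover have "isCont (g t) (y t)" using gc[OF t] by (simp add: continuous_on_eq_continuous_at)
    ultimately show "(\<lambda>k. g t (dd (n k t))) \<longlonglongrightarrow> g t (y t)"
      by (rule isCont_tendsto_compose[rotated])
  qed
qed

primrec selseq :: "(nat \<Rightarrow> 'a::metric_space) \<Rightarrow> ('t \<Rightarrow> 'a \<Rightarrow> real \<Rightarrow> bool) \<Rightarrow> nat \<Rightarrow> 't \<Rightarrow> nat" where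
  "selseq dd P 0 t = (LEAST i. P t (dd i) 1)"
| "selseq dd P (Suc k) t = (LEAST i. P t (dd i) ((1/2)^Suc k) \<and>
      dist (dd i) (dd (selseq dd P k t)) < 2 * (1/2)^k)"

lemma hit_char:
  fixes \<phi> :: "'a::euclidean_space \<Rightarrow> real"
  assumes pc: "continuous_on UNIV \<phi>"
    and dd: "\<And>x e. e > 0 \<Longrightarrow> \<exists>i. dist (dd i) x < e"
  shows "(\<exists>z. \<phi> z = 0 \<and> dist w z < r) \<longleftrightarrow>
    (\<exists>n::nat. \<forall>m::nat. \<exists>i::nat. dist (dd i) w \<le> r - 1 / Suc n \<and> \<bar>\<phi> (dd i)\<bar> < 1 / Suc m)"
proof
  assume "\<exists>z. \<phi> z = 0 \<and> dist w z < r"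
  then obtain z where z: "\<phi> z = 0" "dist w z < r" by blast
  obtain n where n: "1 / Suc n < (r - dist w z) / 2"
    using nat_approx_posE[of "(r - dist w z) / 2"] z(2) by auto
  have "\<exists>i. dist (dd i) w \<le> r - 1 / Suc n \<and> \<bar>\<phi> (dd i)\<bar> < 1 / Suc m" for m :: nat
  proof -
    have "isCont \<phi> z" using pc by (simp add: continuous_on_eq_continuous_at)
    then obtain \<delta> where d: "\<delta> > 0" "\<And>y. dist y z < \<delta> \<Longrightarrow> dist (\<phi> y) (\<phi> z) < 1 / Suc m"
      unfolding continuous_at_eps_delta by (metis of_nat_0_less_iff zero_less_Suc zero_less_divide_1_iff)
    obtain i where i: "dist (dd i) z < min \<delta> (1 / Suc n)"
      using dd[of "min \<delta> (1 / Suc n)" z] d(1) by auto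
    have "dist (dd i) w \<le> dist (dd i) z + dist w z" by (metis dist_commute dist_triangle)
    then have "dist (dd i) w \<le> r - 1 / Suc n" using i n by auto
    moreover have "\<bar>\<phi> (dd i)\<bar> < 1 / Suc m" using d(2)[of "dd i"] i z(1) by (simp add: dist_real_def)
    ultimately show ?thesis by blast
  qed
  then show "\<exists>n::nat. \<forall>m::nat. \<exists>i::nat. dist (dd i) w \<le> r - 1 / Suc n \<and> \<bar>\<phi> (dd i)\<bar> < 1 / Suc m"
    by blast
next
  assume "\<exists>n::nat. \<forall>m::nat. \<exists>i::nat. dist (dd i) w \<le> r - 1 / Suc n \<and> \<bar>\<phi> (dd i)\<bar> < 1 / Suc m"
  then obtain n where "\<forall>m::nat. \<exists>i::nat. dist (dd i) w \<le> r - 1 / Suc n \<and> \<bar>\<phi> (dd i)\<bar> < 1 / Suc m"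
    by blast
  then obtain im where im: "\<And>m. dist (dd (im m)) w \<le> r - 1 / Suc n \<and> \<bar>\<phi> (dd (im m))\<bar> < 1 / Suc m"
    by metis
  define q where "q m = dd (im m)" for m
  have qK: "q m \<in> cball w (r - 1 / Suc n)" for m using im[of m] by (simp add: q_def dist_commute)
  have "compact (cball w (r - 1 / Suc n))" by simp
  then obtain l \<sigma> where l: "l \<in> cball w (r - 1 / Suc n)" "strict_mono \<sigma>" "(q \<circ> \<sigma>) \<longlonglongrightarrow> l"
    using qK unfolding compact_def by metis
  have "isCont \<phi> l" using pc by (simp add: continuous_on_eq_continuous_at)
  then have t1: "(\<lambda>m. \<phi> (q (\<sigma> m))) \<longlonglongrightarrow> \<phi> l"
    using l(3) isCont_tendsto_compose[of l \<phi> "q \<circ> \<sigma>"] by (simp add: o_def)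
  have lim0: "(\<lambda>m. 1 / real (Suc (\<sigma> m))) \<longlonglongrightarrow> 0"
  proof -
    have "(\<lambda>m. 1 / real (Suc m)) \<longlonglongrightarrow> 0" using LIMSEQ_inverse_real_of_nat by (simp add: inverse_eq_divide)
    then show ?thesis using LIMSEQ_subseq_LIMSEQ[OF _ l(2)] by (simp add: o_def)
  qed
  have bnd: "\<forall>m. norm (\<phi> (q (\<sigma> m))) \<le> 1 / real (Suc (\<sigma> m))"
    using im by (simp add: q_def less_imp_le)
  have "(\<lambda>m. \<phi> (q (\<sigma> m))) \<longlonglongrightarrow> 0"
    by (rule Lim_null_comparison[OF always_eventually[OF bnd] lim0])
  then have "\<phi> l = 0" using t1 LIMSEQ_unique by blast
  moreover have "dist w l < r"
  proof -
    have "dist w l \<le> r - 1 / Suc n" using l(1) by simp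
    moreover have "0 < 1 / real (Suc n)" by simp
    ultimately show ?thesis by linarith
  qed
  ultimately show "\<exists>z. \<phi> z = 0 \<and> dist w z < r" by blast
qed

lemma meas_selection:
  fixes \<phi> :: "'t \<Rightarrow> 'a::euclidean_space \<Rightarrow> real"
  assumes pm[measurable]: "\<And>w. (\<lambda>t. \<phi> t w) \<in> borel_measurable M"
  and pc: "\<And>t. t \<in> space M \<Longrightarrow> continuous_on UNIV (\<phi> t)"
  and ex: "\<And>t. t \<in> space M \<Longrightarrow> \<exists>w. \<phi> t w = 0"
  shows "\<exists>u \<in> borel_measurable M. \<forall>t\<in>space M. \<phi> t (u t) = 0"
proof -
  obtain dd :: "nat \<Rightarrow> 'a" where dd: "\<And>x e. e > 0 \<Longrightarrow> \<exists>i. dist (dd i) x < e"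
    using dense_seq_exists by blast
  define P where "P t w r \<longleftrightarrow> (\<exists>z. \<phi> t z = 0 \<and> dist w z < r)" for t w r
  have Pm: "Measurable.pred M (\<lambda>t. P t w r)" for w r
  proof -
    have meas: "Measurable.pred M (\<lambda>t. \<exists>n::nat. \<forall>m::nat. \<exists>i::nat. dist (dd i) w \<le> r - 1 / Suc n \<and> \<bar>\<phi> t (dd i)\<bar> < 1 / Suc m)"
      by measurable
    have eq: "t \<in> space M \<Longrightarrow> P t w r = (\<exists>n::nat. \<forall>m::nat. \<exists>i::nat. dist (dd i) w \<le> r - 1 / Suc n \<and> \<bar>\<phi> t (dd i)\<bar> < 1 / Suc m)" for t
      unfolding P_def by (rule hit_char[OF pc dd])
    show ?thesis by (rule measurable_cong[THEN iffD2, OF eq meas])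
  qed
  define s where "s = selseq dd P"
  have sm: "s k \<in> M \<rightarrow>\<^sub>M count_space UNIV" for k
  proof (induction k)
    case 0
    show ?case unfolding s_def selseq.simps by (intro measurable_Least Pm)
  next
    case (Suc k)
    have "Measurable.pred M (\<lambda>t. dist (dd i) (dd (s k t)) < 2 * (1/2)^k)" for i
      by (rule measurable_compose_countable[OF _ Suc]) simp
    then show ?case unfolding s_def selseq.simps
      by (intro measurable_Least pred_intros_logic Pm) (simp add: s_def)
  qed
  define e :: "nat \<Rightarrow> real" where "e k = (1/2)^k" for k
  have step: "\<exists>i. P t (dd i) (e (Suc k)) \<and> dist (dd i) (dd (s k t)) < 2 * e k"
    if Pk: "P t (dd (s k t)) (e k)" for t k
  proof -
    obtain z where z: "\<phi> t z = 0" "dist (dd (s k t)) z < e k" using Pk unfolding P_def by blast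
    obtain i where i: "dist (dd i) z < e (Suc k)" using dd[of "e (Suc k)" z] by (auto simp: e_def)
    have "dist (dd i) (dd (s k t)) \<le> dist (dd i) z + dist (dd (s k t)) z" by (metis dist_commute dist_triangle)
    also have "\<dots> < e (Suc k) + e k" using i z by simp
    also have "\<dots> \<le> 2 * e k" by (simp add: e_def)
    finally show ?thesis using i z unfolding P_def by (metis dist_commute)
  qed
  have sSuc: "s (Suc k) t = (LEAST i. P t (dd i) (e (Suc k)) \<and> dist (dd i) (dd (s k t)) < 2 * e k)" for k t
    by (simp add: s_def e_def)
  have inv: "P t (dd (s k t)) (e k)" if t: "t \<in> space M" for t k
  proof (induction k)
    case 0
    obtain z where z: "\<phi> t z = 0" using ex[OF t] by blast
    obtain i where "dist (dd i) z < 1" using dd[of 1 z] by auto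
    then have "\<exists>i. P t (dd i) 1" using z unfolding P_def by blast
    then show ?case unfolding s_def selseq.simps e_def by (simp add: LeastI_ex[where P="\<lambda>i. P t (dd i) 1"])
  next
    case (Suc k)
    from LeastI_ex[OF step[OF Suc]] show ?case unfolding sSuc by simp
  qed
  have dst: "dist (dd (s (Suc k) t)) (dd (s k t)) < 2 * e k" if t: "t \<in> space M" for t k
    using LeastI_ex[OF step[of t k, OF inv[OF t]]] unfolding sSuc by simp
  define a where "a t k = dd (s k t)" for t k
  define u where "u t = a t 0 + (\<Sum>j. a t (Suc j) - a t j)" for t
  have am: "(\<lambda>t. a t k) \<in> borel_measurable M" for k
    unfolding a_def by (rule measurable_compose_countable[where f="\<lambda>i t. dd i", OF measurable_const sm]) simp
  have esum: "summable (\<lambda>k. 2 * e k)"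
    unfolding e_def by (intro summable_mult summable_geometric) simp
  have alim: "(\<lambda>k. a t k) \<longlonglongrightarrow> u t" if t: "t \<in> space M" for t
  proof -
    have "summable (\<lambda>j. norm (a t (Suc j) - a t j))"
    proof (rule summable_comparison_test[OF _ esum])
      show "\<exists>N. \<forall>n\<ge>N. norm (norm (a t (Suc n) - a t n)) \<le> 2 * e n"
        using dst[OF t] by (auto simp: a_def dist_norm less_imp_le)
    qed
    then have sm2: "summable (\<lambda>j. a t (Suc j) - a t j)" by (rule summable_norm_cancel)
    have "(\<lambda>k. a t 0 + (\<Sum>j<k. a t (Suc j) - a t j)) \<longlonglongrightarrow> u t"
      unfolding u_def by (intro tendsto_add tendsto_const summable_LIMSEQ sm2)
    moreover have "a t 0 + (\<Sum>j<k. a t (Suc j) - a t j) = a t k" for k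
      by (simp add: sum_lessThan_telescope)
    ultimately show ?thesis by simp
  qed
  have um: "u \<in> borel_measurable M"
    by (rule borel_measurable_LIMSEQ_metric[OF am alim])
  have "\<phi> t (u t) = 0" if t: "t \<in> space M" for t
  proof -
    have "\<forall>k. \<exists>z. \<phi> t z = 0 \<and> dist (a t k) z < e k"
      using inv[OF t] unfolding P_def a_def by simp
    from choice[OF this] obtain z where zz: "\<forall>k. \<phi> t (z k) = 0 \<and> dist (a t k) (z k) < e k" by blast
    have z: "\<phi> t (z k) = 0" "dist (a t k) (z k) < e k" for k using zz by simp_all
    have e0: "e \<longlonglongrightarrow> 0" unfolding e_def by (rule LIMSEQ_realpow_zero) simp_all
    have d0: "(\<lambda>k. dist (a t k) (u t)) \<longlonglongrightarrow> 0"
      using alim[OF t] tendsto_dist_iff by blast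
    have "(\<lambda>k. dist (z k) (u t)) \<longlonglongrightarrow> 0"
    proof (rule Lim_null_comparison[OF always_eventually])
      show "\<forall>k. norm (dist (z k) (u t)) \<le> e k + dist (a t k) (u t)"
      proof
        fix k
        have "dist (z k) (u t) \<le> dist (z k) (a t k) + dist (a t k) (u t)" by (rule dist_triangle)
        then show "norm (dist (z k) (u t)) \<le> e k + dist (a t k) (u t)"
          using z(2)[of k] by (simp add: dist_commute)
      qed
      show "(\<lambda>k. e k + dist (a t k) (u t)) \<longlonglongrightarrow> 0"
        using tendsto_add[OF e0 d0] by simp
    qed
    then have "z \<longlonglongrightarrow> u t" using tendsto_dist_iff by blast
    moreover have "isCont (\<phi> t) (u t)" using pc[OF t] by (simp add: continuous_on_eq_continuous_at)
    ultimately have "(\<lambda>k. \<phi> t (z k)) \<longlonglongrightarrow> \<phi> t (u t)"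
      by (rule isCont_tendsto_compose[rotated])
    then show ?thesis using z(1) by (simp add: LIMSEQ_const_iff)
  qed
  then show ?thesis using um by blast
qed

lemma loc_abs_cont_continuous:
  assumes "loc_abs_cont x t0"
  shows "continuous_on {t0..} x"
  unfolding continuous_on_iff
proof (intro ballI allI impI)
  fix t e :: real assume t: "t \<in> {t0..}" and e: "e > 0"
  have "abs_cont_on x t0 (t + 1)" using assms t unfolding loc_abs_cont_def by auto
  then obtain \<delta> where d: "\<delta> > 0" and H: "\<And>(n::nat) (c::nat \<Rightarrow> real) (d::nat \<Rightarrow> real).
        (\<forall>i<n. t0 \<le> c i \<and> c i \<le> d i \<and> d i \<le> t + 1) \<longrightarrow>
        (\<forall>i<n. \<forall>j<n. i \<noteq> j \<longrightarrow> d i \<le> c j \<or> d j \<le> c i) \<longrightarrow>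
        (\<Sum>i<n. d i - c i) < \<delta> \<longrightarrow>
        (\<Sum>i<n. norm (x (d i) - x (c i))) < e"
    unfolding abs_cont_on_def using e by blast
  show "\<exists>d>0. \<forall>t'\<in>{t0..}. dist t' t < d \<longrightarrow> dist (x t') (x t) < e"
  proof (intro exI[of _ "min \<delta> 1"] conjI ballI impI)
    show "0 < min \<delta> 1" using d by simp
    fix t' assume t': "t' \<in> {t0..}" and dt: "dist t' t < min \<delta> 1"
    have "norm (x (max t t') - x (min t t')) < e"
      using H[of 1 "\<lambda>_. min t t'" "\<lambda>_. max t t'"] t t' dt
      by (auto simp: dist_real_def split: if_splits)
    then show "dist (x t') (x t) < e"
      by (cases "t \<le> t'") (auto simp: dist_norm norm_minus_commute max_def min_def)
  qed
qed

lemma sets_lebesgue_on_iff: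
  assumes "S \<in> sets lebesgue"
  shows "A \<in> sets (lebesgue_on S) \<longleftrightarrow> A \<subseteq> S \<and> A \<in> sets lebesgue"
  using assms by (simp add: sets_restrict_space_iff)

lemma meas_lebesgue_on_AE_cong:
  assumes g: "g \<in> borel_measurable (lebesgue_on S)" and S: "S \<in> sets lebesgue"
    and N: "N \<in> null_sets lebesgue" and eq: "\<And>t. t \<in> S \<Longrightarrow> t \<notin> N \<Longrightarrow> g' t = g t"
  shows "g' \<in> borel_measurable (lebesgue_on S)"
proof (rule measurableI)
  fix B :: "'b set" assume B: "B \<in> sets borel"
  have "g -` B \<inter> space (lebesgue_on S) \<in> sets (lebesgue_on S)"
    using g B by (rule measurable_sets)
  then have g1: "g -` B \<inter> S \<in> sets lebesgue" using S by (simp add: sets_lebesgue_on_iff)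
  have "g' -` B \<inter> S \<inter> N \<in> null_sets lebesgue"
    by (rule completion.complete2[OF _ N]) auto
  then have g2: "g' -` B \<inter> S \<inter> N \<in> sets lebesgue" by auto
  have "g' -` B \<inter> S = (g -` B \<inter> S - N) \<union> (g' -` B \<inter> S \<inter> N)" using eq by auto
  also have "\<dots> \<in> sets lebesgue" using g1 g2 N by auto
  finally show "g' -` B \<inter> space (lebesgue_on S) \<in> sets (lebesgue_on S)"
    using S by (simp add: sets_lebesgue_on_iff)
qed auto

lemma deriv_meas:
  fixes x :: "real \<Rightarrow> 'a::euclidean_space"
  assumes xc: "continuous_on {t0..} x" and G: "G \<subseteq> {t0..}" "G \<in> sets lebesgue"
    and dif: "\<And>t. t \<in> G \<Longrightarrow> x differentiable (at t)"
  shows "(\<lambda>t. if t \<in> G then vector_derivative x (at t) else 0) \<in> borel_measurable (lebesgue_on {t0..})"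
proof -
  define q where "q k t = (if t \<in> G then real (Suc k) *\<^sub>R (x (t + 1 / Suc k) - x t) else 0)" for k t
  have S: "{t0..} \<in> sets lebesgue" by simp
  have qm: "q k \<in> borel_measurable (lebesgue_on {t0..})" for k
    unfolding q_def
  proof (rule measurable_If_set)
    have "continuous_on {t0..} (\<lambda>t. real (Suc k) *\<^sub>R (x (t + 1 / Suc k) - x t))"
    proof (intro continuous_intros)
      show "continuous_on {t0..} (\<lambda>t. x (t + 1 / Suc k))"
        by (rule continuous_on_compose2[OF xc]) (auto intro!: continuous_intros simp: add_increasing2)
    qed (rule xc)
    then show "(\<lambda>t. real (Suc k) *\<^sub>R (x (t + 1 / Suc k) - x t)) \<in> borel_measurable (lebesgue_on {t0..})"
      using S by (rule continuous_imp_measurable_on_sets_lebesgue)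
    show "G \<inter> space (lebesgue_on {t0..}) \<in> sets (lebesgue_on {t0..})"
      using G S by (simp add: sets_lebesgue_on_iff Int_absorb2)
  qed simp
  show ?thesis
  proof (rule borel_measurable_LIMSEQ_metric[OF qm])
    fix t assume "t \<in> space (lebesgue_on {t0..})"
    show "(\<lambda>k. q k t) \<longlonglongrightarrow> (if t \<in> G then vector_derivative x (at t) else 0)"
    proof (cases "t \<in> G")
      case False then show ?thesis by (simp add: q_def)
    next
      case True
      define v where "v = vector_derivative x (at t)"
      have "(x has_vector_derivative v) (at t)" using dif[OF True] vector_derivative_works v_def by blast
      then have "(x has_derivative (\<lambda>h. h *\<^sub>R v)) (at t)" by (simp add: has_vector_derivative_def)
      then have L: "((\<lambda>h. norm (x (t + h) - x t - h *\<^sub>R v) / norm h) \<longlongrightarrow> 0) (at 0)"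
        by (simp add: has_derivative_at)
      define h where "h k = 1 / real (Suc k)" for k
      have h0: "filterlim h (at 0) sequentially"
        unfolding filterlim_at h_def
        using LIMSEQ_inverse_real_of_nat by (simp add: inverse_eq_divide)
      have "(\<lambda>k. norm (x (t + h k) - x t - h k *\<^sub>R v) / norm (h k)) \<longlonglongrightarrow> 0"
        by (rule filterlim_compose[OF L h0])
      moreover have "norm (x (t + h k) - x t - h k *\<^sub>R v) / norm (h k) = norm (q k t - v)" for k
      proof -
        have "norm (x (t + h k) - x t - h k *\<^sub>R v) / norm (h k)
            = norm ((1 / h k) *\<^sub>R (x (t + h k) - x t - h k *\<^sub>R v))"
          by (simp add: h_def divide_inverse)
        also have "(1 / h k) *\<^sub>R (x (t + h k) - x t - h k *\<^sub>R v) = q k t - v"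
          using True by (simp add: q_def h_def algebra_simps)
        finally show ?thesis .
      qed
      ultimately have "(\<lambda>k. norm (q k t - v)) \<longlonglongrightarrow> 0" by simp
      then have "(\<lambda>k. q k t) \<longlonglongrightarrow> v" by (simp add: tendsto_norm_zero_iff LIM_zero_iff)
      then show ?thesis using True v_def by simp
    qed
  qed
qed

lemma Hstar_SUP:
  fixes H :: "real \<Rightarrow> 'n::euclidean_space \<Rightarrow> 'n \<Rightarrow> real" and dd :: "nat \<Rightarrow> 'n"
  assumes hc: "continuous_on UNIV (H t y)"
    and dd: "\<And>x e. e > 0 \<Longrightarrow> \<exists>i. dist (dd i) x < e"
  shows "Hstar H t y v = (SUP i. ereal (inner v (dd i) - H t y (dd i)))"
proof (rule antisym)
  define S where "S = (SUP i. ereal (inner v (dd i) - H t y (dd i)))"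
  have gc: "continuous_on UNIV (\<lambda>p. inner v p - H t y p)"
    by (intro continuous_intros hc)
  show "Hstar H t y v \<le> S"
    unfolding Hstar_def
  proof (rule SUP_least)
    fix p
    show "ereal (inner v p - H t y p) \<le> S"
    proof (rule ccontr)
      assume "\<not> ereal (inner v p - H t y p) \<le> S"
      then have lt: "S < ereal (inner v p - H t y p)" by simp
      have "S \<ge> ereal (inner v (dd 0) - H t y (dd 0))" unfolding S_def by (rule SUP_upper) simp
      then obtain r where r: "S = ereal r" using lt by (cases S) auto
      have "isCont (\<lambda>p. inner v p - H t y p) p" using gc by (simp add: continuous_on_eq_continuous_at)
      moreover have "inner v p - H t y p - r > 0" using lt r by simp
      ultimately obtain \<delta> where d: "\<delta> > 0"
        "\<And>q. dist q p < \<delta> \<Longrightarrow> dist (inner v q - H t y q) (inner v p - H t y p) < inner v p - H t y p - r"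
        unfolding continuous_at_eps_delta by blast
      obtain i where i: "dist (dd i) p < \<delta>" using dd d(1) by blast
      have "inner v (dd i) - H t y (dd i) > r" using d(2)[OF i] by (simp add: dist_real_def)
      moreover have "ereal (inner v (dd i) - H t y (dd i)) \<le> S" unfolding S_def by (rule SUP_upper) simp
      ultimately show False using r by simp
    qed
  qed
  show "S \<le> Hstar H t y v"
    unfolding Hstar_def S_def by (rule SUP_mono) blast
qed

lemma Hstar_lower:
  "Hstar H t y v \<ge> ereal (- H t y 0)"
  unfolding Hstar_def by (rule SUP_upper2[of 0]) auto

lemma Hstar_meas:
  fixes H :: "real \<Rightarrow> 'n::euclidean_space \<Rightarrow> 'n \<Rightarrow> real"
  assumes hm: "\<And>y p. (\<lambda>t. H t y p) \<in> borel_measurable M"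
    and hcx: "\<And>t p. t \<in> space M \<Longrightarrow> continuous_on UNIV (\<lambda>y. H t y p)"
    and hcp: "\<And>t y. t \<in> space M \<Longrightarrow> continuous_on UNIV (H t y)"
    and ym: "y \<in> borel_measurable M" and wm: "w \<in> borel_measurable M"
  shows "(\<lambda>t. Hstar H t (y t) (w t)) \<in> borel_measurable M"
proof -
  obtain dd :: "nat \<Rightarrow> 'n" where dd: "\<And>x e. e > 0 \<Longrightarrow> \<exists>i. dist (dd i) x < e"
    using dense_seq_exists by blast
  have m1: "(\<lambda>t. H t (y t) (dd i)) \<in> borel_measurable M" for i
    by (rule carath_meas[of "\<lambda>t z. H t z (dd i)", OF hm hcx ym])
  have "(\<lambda>t. SUP i. ereal (inner (w t) (dd i) - H t (y t) (dd i))) \<in> borel_measurable M"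
    using m1 wm by measurable
  moreover have "t \<in> space M \<Longrightarrow> Hstar H t (y t) (w t) = (SUP i. ereal (inner (w t) (dd i) - H t (y t) (dd i)))" for t
    by (rule Hstar_SUP[OF hcp dd])
  ultimately show ?thesis using measurable_cong by (metis (no_types, lifting))
qed

lemma infdist_meas:
  fixes U :: "real \<Rightarrow> 'm::euclidean_space set"
  assumes U_meas: "measurable_multifun U" and U_ne: "\<And>t. t \<ge> 0 \<Longrightarrow> U t \<noteq> {}" and t0: "t0 \<ge> 0"
  shows "(\<lambda>t. infdist w (U t)) \<in> borel_measurable (lebesgue_on {t0..})"
  unfolding borel_measurable_iff_less
proof
  fix a :: real
  have S: "{t0..} \<in> sets lebesgue" by simp
  have "{t\<in>{0..}. U t \<inter> ball w a \<noteq> {}} \<in> sets lebesgue"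
    using U_meas unfolding measurable_multifun_def by auto
  then have "{t0..} \<inter> {t\<in>{0..}. U t \<inter> ball w a \<noteq> {}} \<in> sets lebesgue" using S by blast
  moreover have "{t \<in> space (lebesgue_on {t0..}). infdist w (U t) < a} = {t0..} \<inter> {t\<in>{0..}. U t \<inter> ball w a \<noteq> {}}"
  proof -
    have "infdist w (U t) < a \<longleftrightarrow> U t \<inter> ball w a \<noteq> {}" if "t \<ge> t0" for t
    proof -
      have ne: "U t \<noteq> {}" using U_ne that t0 by simp
      have "infdist w (U t) < a \<longleftrightarrow> (\<exists>z\<in>U t. dist w z < a)"
        unfolding infdist_notempty[OF ne] by (subst cINF_less_iff) (auto simp: ne intro: bdd_belowI2[of _ 0])
      then show ?thesis by auto
    qed
    then show ?thesis using t0 by auto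
  qed
  ultimately show "{t \<in> space (lebesgue_on {t0..}). infdist w (U t) < a} \<in> sets (lebesgue_on {t0..})"
    using S by (simp add: sets_lebesgue_on_iff)
qed

lemma ext_integral_mono:
  assumes "AE t in lebesgue. t \<in> S \<longrightarrow> g t \<le> g' t"
  shows "ext_integral S g \<le> ext_integral S g'"
proof -
  have 1: "(\<integral>\<^sup>+ t. e2ennreal (max 0 (g t)) * indicator S t \<partial>lebesgue)
      \<le> (\<integral>\<^sup>+ t. e2ennreal (max 0 (g' t)) * indicator S t \<partial>lebesgue)"
    by (rule nn_integral_mono_AE, rule eventually_mono[OF assms])
      (auto split: split_indicator intro!: e2ennreal_mono simp: le_max_iff_disj)
  have 2: "(\<integral>\<^sup>+ t. e2ennreal (max 0 (- g' t)) * indicator S t \<partial>lebesgue)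
      \<le> (\<integral>\<^sup>+ t. e2ennreal (max 0 (- g t)) * indicator S t \<partial>lebesgue)"
    by (rule nn_integral_mono_AE, rule eventually_mono[OF assms])
      (auto split: split_indicator intro!: e2ennreal_mono simp: le_max_iff_disj)
  show ?thesis unfolding ext_integral_def
    by (rule ereal_minus_mono) (use 1 2 in \<open>simp_all add: less_eq_ennreal.rep_eq\<close>)
qed

lemma ext_integral_cong:
  assumes "AE t in lebesgue. t \<in> S \<longrightarrow> g t = g' t"
  shows "ext_integral S g = ext_integral S g'"
  by (rule antisym; rule ext_integral_mono; rule eventually_mono[OF assms]) auto

lemma negpart_finite:
  fixes g :: "real \<Rightarrow> ereal"
  assumes phi: "integrable (lebesgue_on {0..}) \<phi>" and t0: "t0 \<ge> 0"
    and lb: "\<And>t. t \<ge> t0 \<Longrightarrow> g t \<ge> ereal (\<phi> t)"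
  shows "(\<integral>\<^sup>+ t. e2ennreal (max 0 (- g t)) * indicator {t0..} t \<partial>lebesgue) < \<infinity>"
proof -
  have "(\<integral>\<^sup>+ t. e2ennreal (max 0 (- g t)) * indicator {t0..} t \<partial>lebesgue)
      \<le> (\<integral>\<^sup>+ t. ennreal (norm (\<phi> t)) * indicator {0..} t \<partial>lebesgue)"
  proof (rule nn_integral_mono)
    fix t :: real
    show "e2ennreal (max 0 (- g t)) * indicator {t0..} t \<le> ennreal (norm (\<phi> t)) * indicator {0..} t"
    proof (cases "t \<ge> t0")
      case True
      have "max 0 (- g t) \<le> ereal (norm (\<phi> t))"
      proof -
        have "- g t \<le> ereal (- \<phi> t)" using lb[OF True] by (cases "g t") auto
        also have "\<dots> \<le> ereal (norm (\<phi> t))" by simp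
        finally show ?thesis by simp
      qed
      then have "e2ennreal (max 0 (- g t)) \<le> ennreal (norm (\<phi> t))"
        using e2ennreal_mono by fastforce
      then show ?thesis using True t0 by (simp add: indicator_def)
    qed simp
  qed
  also have "\<dots> = (\<integral>\<^sup>+ t. ennreal (norm (\<phi> t)) \<partial>lebesgue_on {0..})"
    by (simp add: nn_integral_restrict_space)
  also have "\<dots> < \<infinity>" using phi by (simp add: integrable_iff_bounded)
  finally show ?thesis .
qed

lemma K1:
  fixes U :: "real \<Rightarrow> 'm::euclidean_space set"
    and H :: "real \<Rightarrow> 'n::euclidean_space \<Rightarrow> 'n \<Rightarrow> real"
    and f :: "real \<Rightarrow> 'n \<Rightarrow> 'm \<Rightarrow> 'n"
    and l :: "real \<Rightarrow> 'n \<Rightarrow> 'm \<Rightarrow> real"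
  assumes t0: "t0 \<ge> 0" and xu: "(x, u) \<in> S_f f U A t0 x0"
    and epi_rep: "\<And>t x. t \<ge> 0 \<Longrightarrow>
        gphHstar H t x \<subseteq> (\<lambda>u. (f t x u, l t x u)) ` U t \<and>
        (\<lambda>u. (f t x u, l t x u)) ` U t \<subseteq> epiHstar H t x"
  shows "x \<in> S_H H A t0 x0 \<and> cost_H H t0 x \<le> cost_f l t0 x u"
proof -
  from xu have lac: "loc_abs_cont x t0" and ae: "AE t in lebesgue. t \<in> {t0..} \<longrightarrow>
         (x has_vector_derivative f t (x t) (u t)) (at t) \<and> u t \<in> U t"
    and x0: "x t0 = x0" and xA: "x ` {t0..} \<subseteq> A"
    unfolding S_f_def by auto
  have key: "x differentiable (at t) \<and> vector_derivative x (at t) = f t (x t) (u t) \<and>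
      Hstar H t (x t) (vector_derivative x (at t)) \<le> ereal (l t (x t) (u t))"
    if t: "t \<in> {t0..}" and d: "(x has_vector_derivative f t (x t) (u t)) (at t)" and uU: "u t \<in> U t" for t
  proof -
    have "(f t (x t) (u t), l t (x t) (u t)) \<in> epiHstar H t (x t)"
      using epi_rep[of t "x t"] t t0 uU by auto
    then have "Hstar H t (x t) (f t (x t) (u t)) \<le> ereal (l t (x t) (u t))"
      unfolding epiHstar_def by simp
    moreover have "vector_derivative x (at t) = f t (x t) (u t)" using d by (rule vector_derivative_at)
    moreover have "x differentiable (at t)" using d by (rule differentiableI_vector)
    ultimately show ?thesis by simp
  qed
  have "AE t in lebesgue. t \<in> {t0..} \<longrightarrow> x differentiable (at t) \<and>
      vector_derivative x (at t) \<in> domHstar H t (x t)"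
  proof (rule eventually_mono[OF ae], intro impI)
    fix t assume h: "t \<in> {t0..} \<longrightarrow> (x has_vector_derivative f t (x t) (u t)) (at t) \<and> u t \<in> U t"
      and t: "t \<in> {t0..}"
    then have k: "x differentiable (at t) \<and> vector_derivative x (at t) = f t (x t) (u t) \<and>
      Hstar H t (x t) (vector_derivative x (at t)) \<le> ereal (l t (x t) (u t))" using key by blast
    then have "Hstar H t (x t) (vector_derivative x (at t)) < \<infinity>"
      using le_less_trans by fastforce
    then show "x differentiable (at t) \<and> vector_derivative x (at t) \<in> domHstar H t (x t)"
      using k by (simp add: domHstar_def)
  qed
  then have "x \<in> S_H H A t0 x0" unfolding S_H_def using lac x0 xA by blast
  moreover have "cost_H H t0 x \<le> cost_f l t0 x u"
    unfolding cost_H_def cost_f_def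
    by (rule ext_integral_mono, rule eventually_mono[OF ae]) (use key in blast)
  ultimately show ?thesis by blast
qed

lemma K2:
  fixes U :: "real \<Rightarrow> 'm::euclidean_space set"
    and H :: "real \<Rightarrow> 'n::euclidean_space \<Rightarrow> 'n \<Rightarrow> real"
    and f :: "real \<Rightarrow> 'n \<Rightarrow> 'm \<Rightarrow> 'n"
    and l :: "real \<Rightarrow> 'n \<Rightarrow> 'm \<Rightarrow> real"
  assumes t0: "t0 \<ge> 0" and xS: "x \<in> S_H H A t0 x0"
    and U_meas: "measurable_multifun U"
    and U_ne: "\<And>t. t \<ge> 0 \<Longrightarrow> U t \<noteq> {}"
    and U_closed: "\<And>t. t \<ge> 0 \<Longrightarrow> closed (U t)"
    and H_meas: "\<And>x p. (\<lambda>t. H t x p) \<in> borel_measurable (lebesgue_on {0..})"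
    and H_cont: "\<And>t p. t \<ge> 0 \<Longrightarrow> continuous_on UNIV (\<lambda>x. H t x p)"
    and H_conv: "\<And>t x. t \<ge> 0 \<Longrightarrow> convex_on UNIV (\<lambda>p. H t x p)"
    and \<phi>_int: "integrable (lebesgue_on {0..}) \<phi>"
    and H_zero: "\<And>t x. t \<ge> 0 \<Longrightarrow> H t x 0 \<le> - \<phi> t"
    and f_meas: "\<And>x u. (\<lambda>t. f t x u) \<in> borel_measurable (lebesgue_on {0..})"
    and l_meas: "\<And>x u. (\<lambda>t. l t x u) \<in> borel_measurable (lebesgue_on {0..})"
    and f_cont: "\<And>t. t \<ge> 0 \<Longrightarrow> continuous_on UNIV (\<lambda>(x, u). f t x u)"
    and l_cont: "\<And>t. t \<ge> 0 \<Longrightarrow> continuous_on UNIV (\<lambda>(x, u). l t x u)"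
    and epi_rep: "\<And>t x. t \<ge> 0 \<Longrightarrow>
        gphHstar H t x \<subseteq> (\<lambda>u. (f t x u, l t x u)) ` U t \<and>
        (\<lambda>u. (f t x u, l t x u)) ` U t \<subseteq> epiHstar H t x"
  shows "integral_well_defined {t0..} (\<lambda>t. Hstar H t (x t) (vector_derivative x (at t))) \<and>
    (\<exists>u. (x, u) \<in> S_f f U A t0 x0 \<and> cost_f l t0 x u = cost_H H t0 x)"
proof -
  from xS have lac: "loc_abs_cont x t0" and ae: "AE t in lebesgue. t \<in> {t0..} \<longrightarrow>
         x differentiable (at t) \<and> vector_derivative x (at t) \<in> domHstar H t (x t)"
    and x0: "x t0 = x0" and xA: "x ` {t0..} \<subseteq> A"
    unfolding S_H_def by auto
  from ae obtain N where N1: "{t \<in> space lebesgue. \<not> (t \<in> {t0..} \<longrightarrow>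
         x differentiable (at t) \<and> vector_derivative x (at t) \<in> domHstar H t (x t))} \<subseteq> N"
    and N2: "N \<in> null_sets lebesgue"
    by (rule AE_E) (blast intro: null_setsI)
  define G where "G = {t0..} - N"
  have S: "{t0..} \<in> sets lebesgue" by simp
  have GS: "G \<subseteq> {t0..}" "G \<in> sets lebesgue" using N2 by (auto simp: G_def)
  have GM: "G \<inter> space (lebesgue_on {t0..}) \<in> sets (lebesgue_on {t0..})"
    using GS S by (simp add: sets_lebesgue_on_iff Int_absorb2)
  have Gp: "x differentiable (at t) \<and> vector_derivative x (at t) \<in> domHstar H t (x t)" if "t \<in> G" for t
    using that N1 unfolding G_def by auto
  have xc: "continuous_on {t0..} x" by (rule loc_abs_cont_continuous[OF lac])
  have xm: "x \<in> borel_measurable (lebesgue_on {t0..})"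
    by (rule continuous_imp_measurable_on_sets_lebesgue[OF xc S])
  define w where "w t = (if t \<in> G then vector_derivative x (at t) else 0)" for t
  have wm: "w \<in> borel_measurable (lebesgue_on {t0..})"
    unfolding w_def by (rule deriv_meas[OF xc GS]) (use Gp in blast)
  have sp: "space (lebesgue_on {t0..}) = {t0..}" by simp
  have sub: "{t0..} \<subseteq> {0::real..}" using t0 by auto
  have Hm: "(\<lambda>t. H t y p) \<in> borel_measurable (lebesgue_on {t0..})" for y p
    by (rule measurable_restrict_mono[OF H_meas sub])
  have fm0: "(\<lambda>t. f t y p) \<in> borel_measurable (lebesgue_on {t0..})" for y p
    by (rule measurable_restrict_mono[OF f_meas sub])
  have lm0: "(\<lambda>t. l t y p) \<in> borel_measurable (lebesgue_on {t0..})" for y p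
    by (rule measurable_restrict_mono[OF l_meas sub])
  have hcp: "continuous_on UNIV (H t y)" if "t \<in> space (lebesgue_on {t0..})" for t y
    using convex_on_continuous[OF open_UNIV H_conv[of t y]] that t0 by simp
  have Hsm: "(\<lambda>t. Hstar H t (x t) (w t)) \<in> borel_measurable (lebesgue_on {t0..})"
    by (rule Hstar_meas[OF Hm _ hcp xm wm]) (use H_cont t0 in auto)
  have lowb: "Hstar H t y v \<ge> ereal (\<phi> t)" if "t \<ge> 0" for t y v
  proof -
    have "ereal (\<phi> t) \<le> ereal (- H t y 0)" using H_zero[OF that, of y] by simp
    then show ?thesis using Hstar_lower[of H t y v] by (rule order_trans)
  qed
  have W1: "integral_well_defined {t0..} (\<lambda>t. Hstar H t (x t) (vector_derivative x (at t)))"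
    unfolding integral_well_defined_def
  proof
    show "(\<lambda>t. Hstar H t (x t) (vector_derivative x (at t))) \<in> borel_measurable (lebesgue_on {t0..})"
      by (rule meas_lebesgue_on_AE_cong[OF Hsm S N2]) (simp add: w_def G_def)
    show "(\<integral>\<^sup>+ t. e2ennreal (max 0 (- Hstar H t (x t) (vector_derivative x (at t)))) * indicator {t0..} t \<partial>lebesgue) < \<infinity>"
      by (rule negpart_finite[OF \<phi>_int t0]) (use lowb t0 in auto)
  qed
  define hh where "hh t = real_of_ereal (Hstar H t (x t) (w t))" for t
  have hhm: "hh \<in> borel_measurable (lebesgue_on {t0..})"
    unfolding hh_def using Hsm by measurable
  have fc: "continuous_on UNIV (\<lambda>y. f t y p)" if "t \<ge> 0" for t p
  proof -
    have "continuous_on UNIV (\<lambda>y. (y, p))" by (intro continuous_intros)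
    from continuous_on_compose[OF this continuous_on_subset[OF f_cont[OF that]]]
    show ?thesis by (simp add: o_def)
  qed
  have fc2: "continuous_on UNIV (\<lambda>p. f t y p)" if "t \<ge> 0" for t y
  proof -
    have "continuous_on UNIV (\<lambda>p. (y, p))" by (intro continuous_intros)
    from continuous_on_compose[OF this continuous_on_subset[OF f_cont[OF that]]]
    show ?thesis by (simp add: o_def)
  qed
  have lc: "continuous_on UNIV (\<lambda>y. l t y p)" if "t \<ge> 0" for t p
  proof -
    have "continuous_on UNIV (\<lambda>y. (y, p))" by (intro continuous_intros)
    from continuous_on_compose[OF this continuous_on_subset[OF l_cont[OF that]]]
    show ?thesis by (simp add: o_def)
  qed
  have lc2: "continuous_on UNIV (\<lambda>p. l t y p)" if "t \<ge> 0" for t y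
  proof -
    have "continuous_on UNIV (\<lambda>p. (y, p))" by (intro continuous_intros)
    from continuous_on_compose[OF this continuous_on_subset[OF l_cont[OF that]]]
    show ?thesis by (simp add: o_def)
  qed
  define \<psi> where "\<psi> t p = (if t \<in> G then infdist p (U t) + norm (f t (x t) p - w t) + \<bar>l t (x t) p - hh t\<bar> else 0)" for t p
  have \<psi>m: "(\<lambda>t. \<psi> t p) \<in> borel_measurable (lebesgue_on {t0..})" for p
    unfolding \<psi>_def
  proof (rule measurable_If_set[OF _ _ GM])
    have [measurable]: "(\<lambda>t. f t (x t) p) \<in> borel_measurable (lebesgue_on {t0..})"
      by (rule carath_meas[of "\<lambda>t y. f t y p", OF fm0 _ xm]) (use fc t0 in auto)
    have [measurable]: "(\<lambda>t. l t (x t) p) \<in> borel_measurable (lebesgue_on {t0..})"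
      by (rule carath_meas[of "\<lambda>t y. l t y p", OF lm0 _ xm]) (use lc t0 in auto)
    have [measurable]: "(\<lambda>t. infdist p (U t)) \<in> borel_measurable (lebesgue_on {t0..})"
      by (rule infdist_meas[OF U_meas U_ne t0])
    note [measurable] = wm hhm
    show "(\<lambda>t. infdist p (U t) + norm (f t (x t) p - w t) + \<bar>l t (x t) p - hh t\<bar>) \<in> borel_measurable (lebesgue_on {t0..})"
      by measurable
  qed simp
  have \<psi>c: "continuous_on UNIV (\<psi> t)" if "t \<in> space (lebesgue_on {t0..})" for t
  proof (cases "t \<in> G")
    case True
    have t: "t \<ge> 0" using that t0 by simp
    show ?thesis unfolding \<psi>_def using True
      by (simp, intro continuous_intros fc2[OF t] lc2[OF t])
  qed (simp add: \<psi>_def)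
  have \<psi>ex: "\<exists>p. \<psi> t p = 0" if "t \<in> space (lebesgue_on {t0..})" for t
  proof (cases "t \<in> G")
    case True
    have t: "t \<ge> 0" using that t0 by simp
    have wt: "w t = vector_derivative x (at t)" using True by (simp add: w_def)
    have fin: "Hstar H t (x t) (w t) < \<infinity>" using Gp[OF True] wt by (simp add: domHstar_def)
    have "Hstar H t (x t) (w t) \<ge> ereal (\<phi> t)" by (rule lowb[OF t])
    then have eq: "Hstar H t (x t) (w t) = ereal (hh t)"
      using fin unfolding hh_def by (cases "Hstar H t (x t) (w t)") auto
    have "(w t, hh t) \<in> gphHstar H t (x t)"
      unfolding gphHstar_def domHstar_def using eq by simp
    then obtain p where p: "p \<in> U t" "f t (x t) p = w t" "l t (x t) p = hh t"
      using epi_rep[OF t, of "x t"] by force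
    then show ?thesis using True by (intro exI[of _ p]) (simp add: \<psi>_def)
  qed (simp add: \<psi>_def)
  obtain u where um: "u \<in> borel_measurable (lebesgue_on {t0..})"
    and u0: "\<And>t. t \<in> space (lebesgue_on {t0..}) \<Longrightarrow> \<psi> t (u t) = 0"
    using meas_selection[of \<psi>, OF \<psi>m \<psi>c \<psi>ex] by blast
  have uG: "u t \<in> U t \<and> f t (x t) (u t) = vector_derivative x (at t) \<and>
      l t (x t) (u t) = hh t \<and> Hstar H t (x t) (vector_derivative x (at t)) = ereal (hh t)"
    if tG: "t \<in> G" for t
  proof -
    have t: "t \<ge> 0" "t \<ge> t0" using tG GS t0 by auto
    have wt: "w t = vector_derivative x (at t)" using tG by (simp add: w_def)
    have z: "infdist (u t) (U t) + norm (f t (x t) (u t) - w t) + \<bar>l t (x t) (u t) - hh t\<bar> = 0"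
      using u0[of t] tG t by (simp add: \<psi>_def)
    have nn: "infdist (u t) (U t) \<ge> 0" by (rule infdist_nonneg)
    have i0: "infdist (u t) (U t) = 0" using z nn
      by (smt (verit, best) abs_ge_zero norm_ge_zero)
    have "norm (f t (x t) (u t) - w t) = 0" using z nn by (smt (verit, best) abs_ge_zero norm_ge_zero)
    then have fe: "f t (x t) (u t) = vector_derivative x (at t)" using wt by simp
    have le: "l t (x t) (u t) = hh t" using z nn by (smt (verit, best) abs_ge_zero norm_ge_zero)
    have uU: "u t \<in> U t" using i0 in_closed_iff_infdist_zero[OF U_closed[OF t(1)] U_ne[OF t(1)]] by simp
    have fin: "Hstar H t (x t) (w t) < \<infinity>" using Gp[OF tG] wt by (simp add: domHstar_def)
    have "Hstar H t (x t) (w t) \<ge> ereal (\<phi> t)" by (rule lowb[OF t(1)])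
    then have eq: "Hstar H t (x t) (w t) = ereal (hh t)"
      using fin unfolding hh_def by (cases "Hstar H t (x t) (w t)") auto
    show ?thesis using uU fe le eq wt by simp
  qed
  have aeG: "AE t in lebesgue. t \<in> {t0..} \<longrightarrow> t \<in> G"
    by (rule AE_I'[OF N2]) (auto simp: G_def)
  have "(x, u) \<in> S_f f U A t0 x0"
    unfolding S_f_def
  proof (clarify, intro conjI)
    show "u \<in> borel_measurable (lebesgue_on {t0..})" by (rule um)
    show "AE t in lebesgue. t \<in> {t0..} \<longrightarrow> (x has_vector_derivative f t (x t) (u t)) (at t) \<and> u t \<in> U t"
    proof (rule eventually_mono[OF aeG], intro impI)
      fix t assume "t \<in> {t0..} \<longrightarrow> t \<in> G" "t \<in> {t0..}"
      then have tG: "t \<in> G" by blast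
      have "(x has_vector_derivative vector_derivative x (at t)) (at t)"
        using Gp[OF tG] vector_derivative_works by blast
      then show "(x has_vector_derivative f t (x t) (u t)) (at t) \<and> u t \<in> U t" using uG[OF tG] by simp
    qed
  qed (use lac x0 xA in auto)
  moreover have "cost_f l t0 x u = cost_H H t0 x"
    unfolding cost_f_def cost_H_def
    by (rule ext_integral_cong, rule eventually_mono[OF aeG]) (use uG in auto)
  ultimately show ?thesis using W1 by blast
qed

lemma W2:
  fixes U :: "real \<Rightarrow> 'm::euclidean_space set"
    and f :: "real \<Rightarrow> 'n::euclidean_space \<Rightarrow> 'm \<Rightarrow> 'n"
    and l :: "real \<Rightarrow> 'n \<Rightarrow> 'm \<Rightarrow> real"
  assumes t0: "t0 \<ge> 0" and xu: "(x, u) \<in> S_f f U A t0 x0"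
    and l_meas: "\<And>x u. (\<lambda>t. l t x u) \<in> borel_measurable (lebesgue_on {0..})"
    and l_cont: "\<And>t. t \<ge> 0 \<Longrightarrow> continuous_on UNIV (\<lambda>(x, u). l t x u)"
    and \<phi>1_int: "integrable (lebesgue_on {0..}) \<phi>1"
    and l_bound: "\<And>t x u. t \<ge> 0 \<Longrightarrow> l t x u \<ge> \<phi>1 t"
  shows "integral_well_defined {t0..} (\<lambda>t. ereal (l t (x t) (u t)))"
proof -
  from xu have lac: "loc_abs_cont x t0" and um: "u \<in> borel_measurable (lebesgue_on {t0..})"
    unfolding S_f_def by auto
  have S: "{t0..} \<in> sets lebesgue" by simp
  have xm: "x \<in> borel_measurable (lebesgue_on {t0..})"
    by (rule continuous_imp_measurable_on_sets_lebesgue[OF loc_abs_cont_continuous[OF lac] S])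
  have sub: "{t0..} \<subseteq> {0::real..}" using t0 by auto
  have gm: "(\<lambda>t. (\<lambda>(a, b). l t a b) z) \<in> borel_measurable (lebesgue_on {t0..})" for z
    by (cases z) (simp add: measurable_restrict_mono[OF l_meas sub])
  have "(\<lambda>t. (\<lambda>(a, b). l t a b) (x t, u t)) \<in> borel_measurable (lebesgue_on {t0..})"
    by (rule carath_meas[of "\<lambda>t. \<lambda>(a, b). l t a b", OF gm]) (use l_cont t0 xm um in auto)
  then have "(\<lambda>t. l t (x t) (u t)) \<in> borel_measurable (lebesgue_on {t0..})" by simp
  then have m: "(\<lambda>t. ereal (l t (x t) (u t))) \<in> borel_measurable (lebesgue_on {t0..})" by measurable
  show ?thesis unfolding integral_well_defined_def
    by (intro conjI m negpart_finite[OF \<phi>1_int t0]) (use l_bound t0 in auto)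
qed

theorem theorem4p6:
  fixes A :: "(real^'n) set"
    and U :: "real \<Rightarrow> (real^'m) set"
    and H :: "real \<Rightarrow> real^'n \<Rightarrow> real^'n \<Rightarrow> real"
    and f :: "real \<Rightarrow> real^'n \<Rightarrow> real^'m \<Rightarrow> real^'n"
    and l :: "real \<Rightarrow> real^'n \<Rightarrow> real^'m \<Rightarrow> real"
    and \<phi> \<phi>1 :: "real \<Rightarrow> real"
  assumes A_ne: "A \<noteq> {}" and A_closed: "closed A"
    and U_meas: "measurable_multifun U"
    and U_ne: "\<And>t. t \<ge> 0 \<Longrightarrow> U t \<noteq> {}"
    and U_closed: "\<And>t. t \<ge> 0 \<Longrightarrow> closed (U t)"
    and H_meas: "\<And>x p. (\<lambda>t. H t x p) \<in> borel_measurable (lebesgue_on {0..})"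
    and H_cont: "\<And>t p. t \<ge> 0 \<Longrightarrow> continuous_on UNIV (\<lambda>x. H t x p)"
    and H_conv: "\<And>t x. t \<ge> 0 \<Longrightarrow> convex_on UNIV (\<lambda>p. H t x p)"
    and \<phi>_int: "integrable (lebesgue_on {0..}) \<phi>"
    and H_zero: "\<And>t x. t \<ge> 0 \<Longrightarrow> H t x 0 \<le> - \<phi> t"
    and f_meas: "\<And>x u. (\<lambda>t. f t x u) \<in> borel_measurable (lebesgue_on {0..})"
    and l_meas: "\<And>x u. (\<lambda>t. l t x u) \<in> borel_measurable (lebesgue_on {0..})"
    and f_cont: "\<And>t. t \<ge> 0 \<Longrightarrow> continuous_on UNIV (\<lambda>(x, u). f t x u)"
    and l_cont: "\<And>t. t \<ge> 0 \<Longrightarrow> continuous_on UNIV (\<lambda>(x, u). l t x u)"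
    and \<phi>1_int: "integrable (lebesgue_on {0..}) \<phi>1"
    and l_bound: "\<And>t x u. t \<ge> 0 \<Longrightarrow> l t x u \<ge> \<phi>1 t"
    and epi_rep: "\<And>t x. t \<ge> 0 \<Longrightarrow>
        gphHstar H t x \<subseteq> (\<lambda>u. (f t x u, l t x u)) ` U t \<and>
        (\<lambda>u. (f t x u, l t x u)) ` U t \<subseteq> epiHstar H t x"
  shows
    "(\<forall>t0\<ge>0. \<forall>x0\<in>A.
        (\<forall>x\<in>S_H H A t0 x0.
           integral_well_defined {t0..} (\<lambda>t. Hstar H t (x t) (vector_derivative x (at t)))) \<and>
        (\<forall>(x, u)\<in>S_f f U A t0 x0.
           integral_well_defined {t0..} (\<lambda>t. ereal (l t (x t) (u t)))) \<and>
        V_H H A t0 x0 = V_f f l U A t0 x0) \<and>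
     (\<forall>t0\<ge>0. \<forall>x0\<in>A. \<forall>xb.
        V_H H A t0 x0 < \<infinity> \<and> xb \<in> S_H H A t0 x0 \<and> cost_H H t0 xb = V_H H A t0 x0 \<longrightarrow>
        (\<exists>ub. (xb, ub) \<in> S_f f U A t0 x0 \<and> cost_f l t0 xb ub = V_f f l U A t0 x0)) \<and>
     (\<forall>t0\<ge>0. \<forall>x0\<in>A. \<forall>xb ub.
        V_f f l U A t0 x0 < \<infinity> \<and> (xb, ub) \<in> S_f f U A t0 x0 \<and>
        cost_f l t0 xb ub = V_f f l U A t0 x0 \<longrightarrow>
        xb \<in> S_H H A t0 x0 \<and> cost_H H t0 xb = V_H H A t0 x0)"
proof -
  have P1: "integral_well_defined {t0..} (\<lambda>t. Hstar H t (x t) (vector_derivative x (at t))) \<and>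
    (\<exists>u. (x, u) \<in> S_f f U A t0 x0 \<and> cost_f l t0 x u = cost_H H t0 x)"
    if "t0 \<ge> 0" "x \<in> S_H H A t0 x0" for t0 x0 x
    by (rule K2[OF that U_meas U_ne U_closed H_meas H_cont H_conv \<phi>_int H_zero f_meas l_meas
          f_cont l_cont epi_rep])
  have P2: "x \<in> S_H H A t0 x0 \<and> cost_H H t0 x \<le> cost_f l t0 x u"
    if "t0 \<ge> 0" "(x, u) \<in> S_f f U A t0 x0" for t0 x0 x u
    by (rule K1[OF that epi_rep])
  have VV: "V_H H A t0 x0 = V_f f l U A t0 x0" if t0: "t0 \<ge> 0" for t0 x0
  proof (rule antisym)
    show "V_H H A t0 x0 \<le> V_f f l U A t0 x0"
      unfolding V_f_def
    proof (rule INF_greatest)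
      fix xu assume xu: "xu \<in> S_f f U A t0 x0"
      obtain x u where xu': "xu = (x, u)" by (cases xu)
      have "x \<in> S_H H A t0 x0 \<and> cost_H H t0 x \<le> cost_f l t0 x u" using P2[OF t0] xu xu' by blast
      then have "V_H H A t0 x0 \<le> cost_f l t0 x u"
        unfolding V_H_def by (meson INF_lower order_trans)
      then show "V_H H A t0 x0 \<le> cost_f l t0 (fst xu) (snd xu)" using xu' by simp
    qed
    show "V_f f l U A t0 x0 \<le> V_H H A t0 x0"
      unfolding V_H_def
    proof (rule INF_greatest)
      fix x assume x: "x \<in> S_H H A t0 x0"
      then obtain u where u: "(x, u) \<in> S_f f U A t0 x0" "cost_f l t0 x u = cost_H H t0 x"
        using P1[OF t0] by blast
      have "V_f f l U A t0 x0 \<le> cost_f l t0 (fst (x, u)) (snd (x, u))"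
        unfolding V_f_def by (rule INF_lower[OF u(1)])
      then show "V_f f l U A t0 x0 \<le> cost_H H t0 x" using u(2) by simp
    qed
  qed
  have part1: "\<forall>t0\<ge>0. \<forall>x0\<in>A.
        (\<forall>x\<in>S_H H A t0 x0.
           integral_well_defined {t0..} (\<lambda>t. Hstar H t (x t) (vector_derivative x (at t)))) \<and>
        (\<forall>(x, u)\<in>S_f f U A t0 x0.
           integral_well_defined {t0..} (\<lambda>t. ereal (l t (x t) (u t)))) \<and>
        V_H H A t0 x0 = V_f f l U A t0 x0"
  proof (intro allI impI ballI)
    fix t0 :: real and x0 assume t0: "t0 \<ge> 0"
    show "(\<forall>x\<in>S_H H A t0 x0.
           integral_well_defined {t0..} (\<lambda>t. Hstar H t (x t) (vector_derivative x (at t)))) \<and>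
        (\<forall>(x, u)\<in>S_f f U A t0 x0.
           integral_well_defined {t0..} (\<lambda>t. ereal (l t (x t) (u t)))) \<and>
        V_H H A t0 x0 = V_f f l U A t0 x0"
    proof (intro conjI)
      show "V_H H A t0 x0 = V_f f l U A t0 x0" by (rule VV[OF t0])
      show "\<forall>x\<in>S_H H A t0 x0.
           integral_well_defined {t0..} (\<lambda>t. Hstar H t (x t) (vector_derivative x (at t)))"
        using P1[OF t0] by blast
      show "\<forall>(x, u)\<in>S_f f U A t0 x0. integral_well_defined {t0..} (\<lambda>t. ereal (l t (x t) (u t)))"
      proof (clarify)
        fix x u assume "(x, u) \<in> S_f f U A t0 x0"
        then show "integral_well_defined {t0..} (\<lambda>t. ereal (l t (x t) (u t)))"
          by (rule W2[OF t0 _ l_meas l_cont \<phi>1_int l_bound])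
      qed
    qed
  qed
  have part2: "\<forall>t0\<ge>0. \<forall>x0\<in>A. \<forall>xb.
        V_H H A t0 x0 < \<infinity> \<and> xb \<in> S_H H A t0 x0 \<and> cost_H H t0 xb = V_H H A t0 x0 \<longrightarrow>
        (\<exists>ub. (xb, ub) \<in> S_f f U A t0 x0 \<and> cost_f l t0 xb ub = V_f f l U A t0 x0)"
  proof (intro allI impI ballI)
    fix t0 :: real and x0 xb assume t0: "t0 \<ge> 0"
      and h: "V_H H A t0 x0 < \<infinity> \<and> xb \<in> S_H H A t0 x0 \<and> cost_H H t0 xb = V_H H A t0 x0"
    then obtain u where u: "(xb, u) \<in> S_f f U A t0 x0" "cost_f l t0 xb u = cost_H H t0 xb"
      using P1[OF t0] by blast
    then show "\<exists>ub. (xb, ub) \<in> S_f f U A t0 x0 \<and> cost_f l t0 xb ub = V_f f l U A t0 x0"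
      using h VV[OF t0] by auto
  qed
  have part3: "\<forall>t0\<ge>0. \<forall>x0\<in>A. \<forall>xb ub.
        V_f f l U A t0 x0 < \<infinity> \<and> (xb, ub) \<in> S_f f U A t0 x0 \<and>
        cost_f l t0 xb ub = V_f f l U A t0 x0 \<longrightarrow>
        xb \<in> S_H H A t0 x0 \<and> cost_H H t0 xb = V_H H A t0 x0"
  proof (intro allI impI ballI)
    fix t0 :: real and x0 xb ub assume t0: "t0 \<ge> 0"
      and h: "V_f f l U A t0 x0 < \<infinity> \<and> (xb, ub) \<in> S_f f U A t0 x0 \<and>
        cost_f l t0 xb ub = V_f f l U A t0 x0"
    then have k: "xb \<in> S_H H A t0 x0 \<and> cost_H H t0 xb \<le> cost_f l t0 xb ub" using P2[OF t0] by blast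
    have "V_H H A t0 x0 \<le> cost_H H t0 xb" unfolding V_H_def using k by (blast intro: INF_lower)
    moreover have "cost_H H t0 xb \<le> V_H H A t0 x0" using k h VV[OF t0] by simp
    ultimately show "xb \<in> S_H H A t0 x0 \<and> cost_H H t0 xb = V_H H A t0 x0" using k by simp
  qed
  show ?thesis using part1 part2 part3 by blast
qed

end
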